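(* Let $M,N$ be weights of $\mathbb{R}^m,\mathbb{R}^n$, let $A\in\mathbb{R}^{m\times n}$ with $MA=AN$, and let $K\subseteq\mathbb{R}^n$ be a closed cone with $A^{[\dagger]}\circ A\circ K\subseteq K$. Then $$(A^{[*]}\circ A)^{[\dagger]}\circ K^{[*]}\subseteq K+\mathcal{N}(A\circ I)\iff (A^{[*]}\circ A)^{[\dagger]}\circ K^{[*]}\subseteq K.$$
   Context: A weight is a real symmetric matrix $W$ with $W^2=I$. $\mathbb{R}^m$ and $\mathbb{R}^n$ carry weights $M\in\mathbb{R}^{m\times m}$ and $N\in\mathbb{R}^{n\times n}$, respectively. The indefinite inner product on the space with weight $W$ is $[x,y]=\langle x,Wy\rangle$. Indefinite matrix product: if $B$ has $p$ columns and $C$ has $p$ rows (or is a vector in $\mathbb{R}^p$), $p\in\{m,n\}$, and $W$ is the weight of $\mathbb{R}^p$, then $B\circ C:=BWC$. $I$ denotes an identity matrix of the appropriate size. Indefinite adjoint of $B\in\mathbb{R}^{p\times q}$: $B^{[*]}:=W_qB^TW_p$, where $W_p,W_q$ are the weights of $\mathbb{R}^p,\mathbb{R}^q$. Indefinite Moore–Penrose inverse: for $B\in\mathbb{R}^{p\times q}$, $B^{[\dagger]}$ is the unique $X\in\mathbb{R}^{q\times p}$ such that - $B\circ X\circ B=B$, - $X\circ B\circ X=X$, - $(B\circ X)^{[*]}=B\circ X$, - $(X\circ B)^{[*]}=X\circ B$. It equals $W_qB^\dagger W_p$. Range and null space: for a matrix $B$ with $q$ columns, $\mathcal{R}(B)=\{B\circ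 x:x\in\mathbb{R}^q\}$ and $\mathcal{N}(B)=\{x\in\mathbb{R}^q:B\circ x=0\}$. A cone is a nonempty set closed under addition and under multiplication by nonnegative scalars. For $S$ a subset of $\mathbb{R}^p$ with weight $W$, the dual is $S^{[*]}=\{x\in\mathbb{R}^p:[x,t]\ge0\ \forall t\in S\}$. For a matrix $B$ and a set $S$, $B\circ S=\{B\circ s:s\in S\}$. The sum of sets is the Minkowski sum. *)

theory Defs
  imports "HOL-Analysis.Analysis"
begin

definition is_weight :: "real^'n^'n \<Rightarrow> bool" where
  "is_weight W \<longleftrightarrow> transpose W = W \<and> W ** W = mat 1"

definition indef_mult :: "real^'p^'p \<Rightarrow> real^'p^'a \<Rightarrow> real^'b^'p \<Rightarrow> real^'b^'a" where
  "indef_mult W B C = B ** W ** C"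

definition indef_app :: "real^'p^'p \<Rightarrow> real^'p^'a \<Rightarrow> real^'p \<Rightarrow> real^'a" where
  "indef_app W B x = B *v (W *v x)"

definition indef_adj :: "real^'p^'p \<Rightarrow> real^'q^'q \<Rightarrow> real^'q^'p \<Rightarrow> real^'p^'q" where
  "indef_adj Wp Wq B = Wq ** transpose B ** Wp"

definition indef_mp :: "real^'p^'p \<Rightarrow> real^'q^'q \<Rightarrow> real^'q^'p \<Rightarrow> real^'p^'q" where
  "indef_mp Wp Wq B = (THE X.
     indef_mult Wp (indef_mult Wq B X) B = B \<and>
     indef_mult Wq (indef_mult Wp X B) X = X \<and>
     indef_adj Wp Wp (indef_mult Wq B X) = indef_mult Wq B X \<and>
     indef_adj Wq Wq (indef_mult Wp X B) = indef_mult Wp X B)"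

definition indef_null :: "real^'q^'q \<Rightarrow> real^'q^'p \<Rightarrow> (real^'q) set" where
  "indef_null Wq B = {x. indef_app Wq B x = 0}"

definition is_cone :: "('a::real_vector) set \<Rightarrow> bool" where
  "is_cone S \<longleftrightarrow> S \<noteq> {} \<and> (\<forall>x\<in>S. \<forall>y\<in>S. x + y \<in> S) \<and> (\<forall>x\<in>S. \<forall>c::real. c \<ge> 0 \<longrightarrow> c *\<^sub>R x \<in> S)"

definition indef_dual :: "real^'p^'p \<Rightarrow> (real^'p) set \<Rightarrow> (real^'p) set" where
  "indef_dual W S = {x. \<forall>t\<in>S. x \<bullet> (W *v t) \<ge> 0}"

definition indef_image :: "real^'p^'p \<Rightarrow> real^'p^'a \<Rightarrow> (real^'p) set \<Rightarrow> (real^'a) set" where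
  "indef_image W B S = indef_app W B ` S"

definition mink_sum :: "('a::plus) set \<Rightarrow> 'a set \<Rightarrow> 'a set" where
  "mink_sum S T = {s + t | s t. s \<in> S \<and> t \<in> T}"

end

theory Submission
  imports Defs
begin

declare transpose_matrix_vector[simp del]

definition mp :: "real^'q^'p \<Rightarrow> real^'p^'q \<Rightarrow> bool" where
  "mp B Z \<longleftrightarrow> B ** Z ** B = B \<and> Z ** B ** Z = Z \<and> transpose (B ** Z) = B ** Z \<and> transpose (Z ** B) = Z ** B"

lemma adj_inner: "(transpose (B::real^'q^'p) *v x) \<bullet> y = x \<bullet> (B *v y)"
  by (simp add: dot_lmul_matrix transpose_matrix_vector)

lemma adj_inner2: "x \<bullet> (transpose (B::real^'q^'p) *v y) = (B *v x) \<bullet> y"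
  by (metis adj_inner inner_commute)

lemma sym_by_inner:
  fixes S :: "real^'n^'n"
  assumes "\<And>x y. (S *v x) \<bullet> y = x \<bullet> (S *v y)"
  shows "transpose S = S"
proof -
  have "transpose S *v x = S *v x" for x
    apply (rule vector_eq_rdot[THEN iffD1])
    using assms by (metis adj_inner)
  then show ?thesis by (simp add: matrix_eq)
qed

lemma decomp:
  fixes B :: "real^'q^'p"
  shows "\<exists>v\<in>range ((*v) (transpose B)). B *v x = B *v v"
proof -
  obtain y z where y: "y \<in> span (range ((*v) (transpose B)))"
    and z: "\<And>w. w \<in> span (range ((*v) (transpose B))) \<Longrightarrow> orthogonal z w"
    and xyz: "x = y + z"
    using orthogonal_subspace_decomp_exists by blast
  have sp: "span (range ((*v) (transpose B))) = range ((*v) (transpose B))"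
    using linear_subspace_image[OF matrix_vector_mul_linear subspace_UNIV] by (simp add: span_eq_iff)
  have "orthogonal z (transpose B *v (B *v z))"
    using z sp by auto
  then have "(B *v z) \<bullet> (B *v z) = 0"
    by (simp add: orthogonal_def adj_inner2)
  then have "B *v z = 0" by simp
  then show ?thesis using y sp xyz
    by (metis add.right_neutral matrix_vector_right_distrib)
qed

lemma mp_exists:
  fixes B :: "real^'q^'p"
  shows "\<exists>Z. mp B Z"
proof -
  let ?f = "(*v) B" and ?ft = "(*v) (transpose B)"
  let ?V = "range ?ft" and ?R = "range ?f"
  have lf: "linear ?f" "linear ?ft" by simp_all
  have sV: "subspace ?V" and sR: "subspace ?R"
    using linear_subspace_image[OF matrix_vector_mul_linear subspace_UNIV] by blast+
  have injV: "inj_on ?f ?V"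
  proof (rule inj_onI)
    fix a b assume "a \<in> ?V" "b \<in> ?V" "B *v a = B *v b"
    then obtain c d where a: "a = transpose B *v c" and b: "b = transpose B *v d" by auto
    let ?e = "transpose B *v (c - d)"
    have "B *v ?e = 0" using \<open>B *v a = B *v b\<close> a b
      by (simp add: matrix_vector_mult_diff_distrib)
    moreover have "?e \<bullet> ?e = (c - d) \<bullet> (B *v ?e)" by (rule adj_inner)
    ultimately have "?e \<bullet> ?e = 0" by simp
    then have "?e = 0" by simp
    then show "a = b" using a b by (simp add: matrix_vector_mult_diff_distrib)
  qed
  have injR: "inj_on ?ft ?R"
  proof (rule inj_onI)
    fix a b assume "a \<in> ?R" "b \<in> ?R" "transpose B *v a = transpose B *v b"
    then obtain c d where a: "a = B *v c" and b: "b = B *v d" by auto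
    let ?e = "B *v (c - d)"
    have "transpose B *v ?e = 0" using \<open>transpose B *v a = transpose B *v b\<close> a b
      by (simp add: matrix_vector_mult_diff_distrib)
    moreover have "?e \<bullet> ?e = (c - d) \<bullet> (transpose B *v ?e)" by (rule adj_inner2[symmetric])
    ultimately have "?e \<bullet> ?e = 0" by simp
    then have "?e = 0" by simp
    then show "a = b" using a b by (simp add: matrix_vector_mult_diff_distrib)
  qed
  obtain g where gV: "range g \<subseteq> ?V" and lg: "linear g" and gf: "\<forall>v\<in>?V. g (B *v v) = v"
    using linear_exists_left_inverse_on[OF lf(1) sV injV] by blast
  obtain h where hR: "range h \<subseteq> ?R" and lh: "linear h" and hf: "\<forall>v\<in>?R. h (transpose B *v v) = v"
    using linear_exists_left_inverse_on[OF lf(2) sR injR] by blast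
  define F where "F = (\<lambda>y. g (h (transpose B *v y)))"
  have "linear ((g \<circ> h) \<circ> (*v) (transpose B))"
    by (rule linear_compose[OF lf(2) linear_compose[OF lh lg]])
  then have lF: "linear F" unfolding F_def by (simp add: o_def)
  define Z where "Z = matrix F"
  have Zv: "Z *v y = F y" for y
    unfolding Z_def using lF by (simp add: matrix_works linear_matrix_vector_mul_eq)
  have decR: "\<exists>r\<in>?R. transpose B *v y = transpose B *v r" for y
    using decomp[of "transpose B" y] by simp
  have FB: "F (B *v x) \<in> ?V \<and> B *v F (B *v x) = B *v x \<and> B *v (x - F (B *v x)) = 0" for x
  proof -
    obtain v where v: "v \<in> ?V" "B *v x = B *v v" using decomp[of B x] by blast
    have "F (B *v x) = g (B *v x)" unfolding F_def using hf by auto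
    also have "\<dots> = v" using v gf by auto
    finally show ?thesis using v by (simp add: matrix_vector_mult_diff_distrib)
  qed
  have BF: "B *v F y = h (transpose B *v y) \<and> transpose B *v (y - h (transpose B *v y)) = 0" for y
  proof -
    obtain r where r: "r \<in> ?R" "transpose B *v y = transpose B *v r" using decR by blast
    have hr: "h (transpose B *v y) = r" using r hf by auto
    obtain x where x: "r = B *v x" using r by auto
    have "h (transpose B *v (B *v x)) = B *v x" using hf by auto
    then have "B *v F y = B *v F (B *v x)" unfolding F_def using hr x by simp
    also have "\<dots> = r" using FB x by simp
    finally show ?thesis using hr r by (simp add: matrix_vector_mult_diff_distrib)
  qed
  have e1: "B ** Z ** B = B"
    by (simp add: matrix_eq matrix_vector_mul_assoc[symmetric] Zv FB)
  have e2: "Z ** B ** Z = Z"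
  proof -
    have "F (B *v F y) = F y" for y
    proof -
      have "F y \<in> ?V" unfolding F_def using gV by auto
      then show ?thesis unfolding F_def using hf gf by auto
    qed
    then show ?thesis by (simp add: matrix_eq matrix_vector_mul_assoc[symmetric] Zv)
  qed
  have e3: "transpose (B ** Z) = B ** Z"
  proof (rule sym_by_inner)
    fix y y'
    have key: "h (transpose B *v y) \<bullet> y' = h (transpose B *v y) \<bullet> h (transpose B *v y')" for y y'
    proof -
      obtain x where x: "h (transpose B *v y) = B *v x" using hR by blast
      have "(B *v x) \<bullet> (y' - h (transpose B *v y')) = x \<bullet> (transpose B *v (y' - h (transpose B *v y')))"
        by (rule adj_inner2[symmetric])
      then have "h (transpose B *v y) \<bullet> (y' - h (transpose B *v y')) = 0"
        unfolding x using BF[of y'] by simp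
      then show ?thesis by (simp add: inner_diff_right)
    qed
    have a: "(B ** Z) *v u = h (transpose B *v u)" for u
      by (simp only: matrix_vector_mul_assoc[symmetric] Zv BF)
    show "((B ** Z) *v y) \<bullet> y' = y \<bullet> ((B ** Z) *v y')"
      unfolding a using key[of y y'] key[of y' y] inner_commute by metis
  qed
  have e4: "transpose (Z ** B) = Z ** B"
  proof (rule sym_by_inner)
    fix x x'
    have key: "F (B *v x) \<bullet> x' = F (B *v x) \<bullet> F (B *v x')" for x x'
    proof -
      obtain c where c: "F (B *v x) = transpose B *v c" using FB[of x] by blast
      have "(transpose B *v c) \<bullet> (x' - F (B *v x')) = c \<bullet> (B *v (x' - F (B *v x')))"
        by (rule adj_inner)
      then have "F (B *v x) \<bullet> (x' - F (B *v x')) = 0"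
        unfolding c using FB[of x'] by simp
      then show ?thesis by (simp add: inner_diff_right)
    qed
    have a: "(Z ** B) *v u = F (B *v u)" for u
      by (simp only: matrix_vector_mul_assoc[symmetric] Zv)
    show "((Z ** B) *v x) \<bullet> x' = x \<bullet> ((Z ** B) *v x')"
      unfolding a using key[of x x'] key[of x' x] inner_commute by metis
  qed
  show ?thesis using e1 e2 e3 e4 unfolding mp_def by blast
qed


lemma mp_unique:
  fixes B :: "real^'q^'p"
  assumes 1: "mp B Z1" and 2: "mp B Z2"
  shows "Z1 = Z2"
proof -
  have a1: "B ** Z1 ** B = B" "Z1 ** B ** Z1 = Z1" "transpose (B ** Z1) = B ** Z1" "transpose (Z1 ** B) = Z1 ** B"
    using 1 unfolding mp_def by auto
  have a2: "B ** Z2 ** B = B" "Z2 ** B ** Z2 = Z2" "transpose (B ** Z2) = B ** Z2" "transpose (Z2 ** B) = Z2 ** B"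
    using 2 unfolding mp_def by auto
  have t1: "transpose B = transpose B ** B ** Z2"
  proof -
    have "transpose B = transpose (B ** Z2 ** B)" using a2 by simp
    also have "\<dots> = transpose B ** transpose (B ** Z2)" by (simp add: matrix_transpose_mul)
    also have "\<dots> = transpose B ** B ** Z2" using a2 by (simp add: matrix_mul_assoc)
    finally show ?thesis .
  qed
  have t2: "transpose B = Z1 ** B ** transpose B"
  proof -
    have "transpose B = transpose (B ** Z1 ** B)" using a1 by simp
    also have "\<dots> = transpose (Z1 ** B) ** transpose B" by (simp add: matrix_transpose_mul matrix_mul_assoc)
    also have "\<dots> = Z1 ** B ** transpose B" using a1 by simp
    finally show ?thesis .
  qed
  have "Z1 = Z1 ** B ** Z1" using a1 by simp
  also have "\<dots> = Z1 ** transpose (B ** Z1)" using a1 by (simp add: matrix_mul_assoc)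
  also have "\<dots> = Z1 ** transpose Z1 ** transpose B" by (simp add: matrix_transpose_mul matrix_mul_assoc)
  also have "\<dots> = Z1 ** transpose Z1 ** (transpose B ** B ** Z2)" using t1 by simp
  also have "\<dots> = Z1 ** transpose (B ** Z1) ** B ** Z2" by (simp add: matrix_transpose_mul matrix_mul_assoc)
  also have "\<dots> = (Z1 ** B ** Z1) ** B ** Z2" using a1 by (simp add: matrix_mul_assoc)
  also have "\<dots> = Z1 ** B ** Z2" using a1 by simp
  finally have e1: "Z1 = Z1 ** B ** Z2" .
  have "Z2 = Z2 ** B ** Z2" using a2 by simp
  also have "\<dots> = transpose (Z2 ** B) ** Z2" using a2 by simp
  also have "\<dots> = transpose B ** transpose Z2 ** Z2" by (simp add: matrix_transpose_mul)
  also have "\<dots> = (Z1 ** B ** transpose B) ** transpose Z2 ** Z2" using t2 by simp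
  also have "\<dots> = Z1 ** B ** transpose (Z2 ** B) ** Z2" by (simp add: matrix_transpose_mul matrix_mul_assoc)
  also have "\<dots> = Z1 ** B ** (Z2 ** B ** Z2)" by (simp only: a2(4) matrix_mul_assoc)
  also have "\<dots> = Z1 ** B ** Z2" using a2 by simp
  finally have e2: "Z2 = Z1 ** B ** Z2" .
  show ?thesis using e1 e2 by simp
qed

lemma weight_facts:
  assumes "is_weight W"
  shows "W ** W = mat 1" "transpose W = W" "W ** (W ** C) = C" "D ** W ** W = D"
proof -
  have w: "W ** W = mat 1" "transpose W = W" using assms unfolding is_weight_def by auto
  have "W ** (W ** C) = (W ** W) ** C" by (simp only: matrix_mul_assoc)
  then have 3: "W ** (W ** C) = C" using w by simp
  have "D ** W ** W = D ** (W ** W)" by (simp only: matrix_mul_assoc)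
  then have 4: "D ** W ** W = D" using w by simp
  show "W ** W = mat 1" "transpose W = W" "W ** (W ** C) = C" "D ** W ** W = D"
    using w 3 4 by auto
qed

definition indef_P where
  "indef_P Wp Wq B X \<longleftrightarrow>
     indef_mult Wp (indef_mult Wq B X) B = B \<and>
     indef_mult Wq (indef_mult Wp X B) X = X \<and>
     indef_adj Wp Wp (indef_mult Wq B X) = indef_mult Wq B X \<and>
     indef_adj Wq Wq (indef_mult Wp X B) = indef_mult Wp X B"

lemma P_to_mp:
  assumes p: "is_weight Wp" and q: "is_weight Wq" and P: "indef_P Wp Wq B X"
  shows "mp B (Wq ** X ** Wp)"
proof -
  note wp = weight_facts[OF p] and wq = weight_facts[OF q]
  have P1: "B ** Wq ** X ** Wp ** B = B" and P2: "X ** Wp ** B ** Wq ** X = X"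
    and P3: "Wp ** transpose (B ** Wq ** X) ** Wp = B ** Wq ** X"
    and P4: "Wq ** transpose (X ** Wp ** B) ** Wq = X ** Wp ** B"
    using P unfolding indef_P_def indef_mult_def indef_adj_def by auto
  have "B ** (Wq ** X ** Wp) ** B = B" using P1 by (simp add: matrix_mul_assoc)
  moreover have "(Wq ** X ** Wp) ** B ** (Wq ** X ** Wp) = Wq ** X ** Wp"
  proof -
    have "(Wq ** X ** Wp) ** B ** (Wq ** X ** Wp) = Wq ** (X ** Wp ** B ** Wq ** X) ** Wp"
      by (simp add: matrix_mul_assoc)
    then show ?thesis using P2 by simp
  qed
  moreover have "transpose (B ** (Wq ** X ** Wp)) = B ** (Wq ** X ** Wp)"
  proof -
    have T: "transpose (B ** Wq ** X) = Wp ** (B ** Wq ** X) ** Wp"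
    proof -
      have "transpose (B ** Wq ** X) = Wp ** (Wp ** transpose (B ** Wq ** X) ** Wp) ** Wp"
        by (simp add: wp matrix_mul_assoc)
      then show ?thesis using P3 by simp
    qed
    have "transpose (B ** (Wq ** X ** Wp)) = Wp ** transpose (B ** Wq ** X)"
      by (simp add: wp matrix_transpose_mul matrix_mul_assoc)
    also have "\<dots> = B ** (Wq ** X ** Wp)" using T by (simp add: wp matrix_mul_assoc)
    finally show ?thesis .
  qed
  moreover have "transpose ((Wq ** X ** Wp) ** B) = (Wq ** X ** Wp) ** B"
  proof -
    have T: "transpose (X ** Wp ** B) = Wq ** (X ** Wp ** B) ** Wq"
    proof -
      have "transpose (X ** Wp ** B) = Wq ** (Wq ** transpose (X ** Wp ** B) ** Wq) ** Wq"
        by (simp add: wq matrix_mul_assoc)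
      then show ?thesis using P4 by simp
    qed
    have "transpose ((Wq ** X ** Wp) ** B) = transpose (X ** Wp ** B) ** Wq"
      by (simp add: wq matrix_transpose_mul matrix_mul_assoc)
    also have "\<dots> = (Wq ** X ** Wp) ** B" using T by (simp add: wq matrix_mul_assoc)
    finally show ?thesis .
  qed
  ultimately show ?thesis unfolding mp_def by blast
qed

lemma mp_to_P:
  assumes p: "is_weight Wp" and q: "is_weight Wq" and Z: "mp B Z"
  shows "indef_P Wp Wq B (Wq ** Z ** Wp)"
proof -
  note wp = weight_facts[OF p] and wq = weight_facts[OF q]
  have Z1: "B ** Z ** B = B" and Z2: "Z ** B ** Z = Z" and Z3: "transpose (B ** Z) = B ** Z"
    and Z4: "transpose (Z ** B) = Z ** B"
    using Z unfolding mp_def by auto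
  have "B ** Wq ** (Wq ** Z ** Wp) ** Wp ** B = B ** Z ** B"
    by (simp add: wp wq matrix_mul_assoc)
  moreover have "(Wq ** Z ** Wp) ** Wp ** B ** Wq ** (Wq ** Z ** Wp) = Wq ** (Z ** B ** Z) ** Wp"
    by (simp add: wp wq matrix_mul_assoc)
  moreover have "Wp ** transpose (B ** Wq ** (Wq ** Z ** Wp)) ** Wp = Wp ** transpose (B ** Z ** Wp) ** Wp"
    by (simp add: wq matrix_mul_assoc)
  moreover have "Wp ** transpose (B ** Z ** Wp) ** Wp = B ** Z ** Wp"
  proof -
    have "transpose (B ** Z ** Wp) = Wp ** transpose (B ** Z)"
      by (simp add: wp matrix_transpose_mul matrix_mul_assoc)
    then show ?thesis using Z3 by (simp add: wp matrix_mul_assoc)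
  qed
  moreover have "B ** Wq ** (Wq ** Z ** Wp) = B ** Z ** Wp"
    by (simp add: wq matrix_mul_assoc)
  moreover have "(Wq ** Z ** Wp) ** Wp ** B = Wq ** (Z ** B)"
    by (simp add: wp matrix_mul_assoc)
  moreover have "Wq ** transpose (Wq ** (Z ** B)) ** Wq = Wq ** (Z ** B)"
  proof -
    have "transpose (Wq ** (Z ** B)) = transpose (Z ** B) ** Wq"
      by (simp add: wq matrix_transpose_mul)
    then show ?thesis using Z4 by (simp add: wq matrix_mul_assoc)
  qed
  ultimately show ?thesis unfolding indef_P_def indef_mult_def indef_adj_def
    using Z1 Z2 by (simp add: matrix_mul_assoc)
qed

lemma indef_mp_mp:
  assumes p: "is_weight Wp" and q: "is_weight Wq"
  shows "mp B (Wq ** indef_mp Wp Wq B ** Wp)"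
proof -
  obtain Z where Z: "mp B Z" using mp_exists by blast
  have "indef_P Wp Wq B (indef_mp Wp Wq B)"
    unfolding indef_mp_def indef_P_def[symmetric]
  proof (rule theI)
    show "indef_P Wp Wq B (Wq ** Z ** Wp)" by (rule mp_to_P[OF p q Z])
    fix X assume "indef_P Wp Wq B X"
    then have "mp B (Wq ** X ** Wp)" by (rule P_to_mp[OF p q])
    then have "Wq ** X ** Wp = Z" using mp_unique Z by blast
    then have "Wq ** (Wq ** X ** Wp) ** Wp = Wq ** Z ** Wp" by simp
    then show "X = Wq ** Z ** Wp"
      by (simp add: weight_facts[OF p] weight_facts[OF q] matrix_mul_assoc)
  qed
  then show ?thesis by (rule P_to_mp[OF p q])
qed


theorem lemma3p14:
  fixes M :: "real^'m^'m" and N :: "real^'n^'n" and A :: "real^'n^'m"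
    and K :: "(real^'n) set"
  assumes "is_weight M" and "is_weight N"
    and "M ** A = A ** N"
    and "is_cone K" and "closed K"
    and "indef_image N (indef_mult M (indef_mp M N A) A) K \<subseteq> K"
  shows "indef_image N (indef_mp N N (indef_mult M (indef_adj M N A) A)) (indef_dual N K)
           \<subseteq> mink_sum K (indef_null N (indef_mult N A (mat 1)))
         \<longleftrightarrow>
         indef_image N (indef_mp N N (indef_mult M (indef_adj M N A) A)) (indef_dual N K) \<subseteq> K"
proof -
  note wm = weight_facts[OF assms(1)] and wn = weight_facts[OF assms(2)]
  define X1 where "X1 = indef_mp M N A"
  define Z1 where "Z1 = N ** X1 ** M"
  have mp1: "mp A Z1" unfolding Z1_def X1_def by (rule indef_mp_mp[OF assms(1,2)])
  have X1: "X1 = N ** Z1 ** M" unfolding Z1_def by (simp add: wm wn matrix_mul_assoc)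
  define B where "B = indef_mult M (indef_adj M N A) A"
  have Bdef: "B = N ** transpose A ** A"
    unfolding B_def indef_mult_def indef_adj_def by (simp add: wm matrix_mul_assoc)
  define X2 where "X2 = indef_mp N N B"
  define Z2 where "Z2 = N ** X2 ** N"
  have mp2: "mp B Z2" unfolding Z2_def X2_def by (rule indef_mp_mp[OF assms(2,2)])
  have X2: "X2 = N ** Z2 ** N" unfolding Z2_def by (simp add: wn matrix_mul_assoc)
  have ZAAt: "Z1 ** A ** transpose A = transpose A"
  proof -
    have "transpose A = transpose (A ** (Z1 ** A))" using mp1 by (simp add: mp_def matrix_mul_assoc)
    also have "\<dots> = transpose (Z1 ** A) ** transpose A" by (simp add: matrix_transpose_mul)
    also have "\<dots> = Z1 ** A ** transpose A" using mp1 by (simp add: mp_def)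
    finally show ?thesis by simp
  qed
  have Z2eq: "Z2 = transpose A ** A ** N ** transpose Z2 ** Z2"
  proof -
    have "Z2 = Z2 ** B ** Z2" using mp2 by (simp add: mp_def)
    also have "\<dots> = transpose (Z2 ** B) ** Z2" using mp2 by (simp add: mp_def)
    also have "\<dots> = transpose B ** transpose Z2 ** Z2" by (simp add: matrix_transpose_mul)
    also have "transpose B = transpose A ** A ** N"
      unfolding Bdef by (simp add: matrix_transpose_mul wn matrix_mul_assoc)
    finally show ?thesis .
  qed
  have key: "Z1 ** A ** Z2 = Z2"
  proof -
    have "Z1 ** A ** Z2 = (Z1 ** A ** transpose A) ** A ** N ** transpose Z2 ** Z2"
      by (subst Z2eq) (simp add: matrix_mul_assoc)
    also have "\<dots> = Z2" using Z2eq ZAAt by simp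
    finally show ?thesis .
  qed
  define R where "R = X1 ** M ** A"
  have Rdef: "R = N ** Z1 ** A" unfolding R_def X1 by (simp add: wm matrix_mul_assoc)
  have hyp: "R *v (N *v k) \<in> K" if "k \<in> K" for k
    using assms(6) that unfolding R_def X1_def indef_image_def indef_app_def indef_mult_def by blast
  have fixpt: "R *v (N *v (X2 *v (N *v x))) = X2 *v (N *v x)" for x
  proof -
    have "R ** N ** X2 ** N = N ** (Z1 ** A ** Z2)"
      unfolding Rdef X2 by (simp add: wn matrix_mul_assoc)
    also have "\<dots> = X2 ** N" unfolding key X2 by (simp add: wn matrix_mul_assoc)
    finally show ?thesis by (simp add: matrix_vector_mul_assoc matrix_mul_assoc)
  qed
  have null: "R *v (N *v z) = 0" if "z \<in> indef_null N (indef_mult N A (mat 1))" for z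
  proof -
    have "(A ** N ** mat 1) *v (N *v z) = 0"
      using that unfolding indef_null_def indef_app_def indef_mult_def by simp
    then have Az: "A *v z = 0" by (simp add: matrix_vector_mul_assoc wn matrix_mul_assoc[symmetric])
    have "R *v (N *v z) = (N ** Z1) *v ((A ** N) *v z)"
      unfolding Rdef by (simp add: matrix_vector_mul_assoc matrix_mul_assoc)
    also have "\<dots> = 0" using Az by (simp add: assms(3)[symmetric] matrix_vector_mul_assoc[symmetric])
    finally show ?thesis .
  qed
  have img: "indef_image N (indef_mp N N (indef_mult M (indef_adj M N A) A)) (indef_dual N K)
     = (\<lambda>x. X2 *v (N *v x)) ` indef_dual N K"
    unfolding indef_image_def indef_app_def X2_def B_def by simp
  show ?thesis
  proof
    assume L: "indef_image N (indef_mp N N (indef_mult M (indef_adj M N A) A)) (indef_dual N K)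
           \<subseteq> mink_sum K (indef_null N (indef_mult N A (mat 1)))"
    show "indef_image N (indef_mp N N (indef_mult M (indef_adj M N A) A)) (indef_dual N K) \<subseteq> K"
    proof
      fix y assume y: "y \<in> indef_image N (indef_mp N N (indef_mult M (indef_adj M N A) A)) (indef_dual N K)"
      then obtain x where yx: "y = X2 *v (N *v x)" using img by auto
      from y L obtain k z where k: "k \<in> K" and z: "z \<in> indef_null N (indef_mult N A (mat 1))"
        and yk: "y = k + z" unfolding mink_sum_def by blast
      have "y = R *v (N *v y)" using fixpt yx by simp
      also have "\<dots> = R *v (N *v k) + R *v (N *v z)"
        unfolding yk by (simp add: matrix_vector_right_distrib)
      also have "\<dots> = R *v (N *v k)" using null[OF z] by simp
      finally show "y \<in> K" using hyp[OF k] by simp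
    qed
  next
    assume R: "indef_image N (indef_mp N N (indef_mult M (indef_adj M N A) A)) (indef_dual N K) \<subseteq> K"
    have "0 \<in> indef_null N (indef_mult N A (mat 1))"
      unfolding indef_null_def indef_app_def by simp
    then have "K \<subseteq> mink_sum K (indef_null N (indef_mult N A (mat 1)))"
      unfolding mink_sum_def by force
    then show "indef_image N (indef_mp N N (indef_mult M (indef_adj M N A) A)) (indef_dual N K)
           \<subseteq> mink_sum K (indef_null N (indef_mult N A (mat 1)))" using R by blast
  qed
qed

end
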